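(* Let $G$ be a compact subset of $\mathbb{T}$ that is Ahlfors regular with dimension $\gamma\in(0,1]$, let $(X_n)_{n\ge1}$ be independent random points each distributed according to the normalized $\gamma$-dimensional Hausdorff measure restricted to $G$, and let $\mathrm{r}=(r_n)$ be a nonincreasing sequence in $(0,1]$ for which there is $\rho\in(0,\infty)$ with $\sum_n r_n^\nu=\infty$ for $\nu<\rho$ and $\sum_n r_n^\nu<\infty$ for $\nu>\rho$. If $\gamma\nu<\rho$, then $\mathcal{E}(\mathrm{X},\mathrm{r}^\nu)=G$ with probability one.
   Context: $\mathbb{T}=\mathbb{R}/\mathbb{Z}$ with quotient distance $d$. A compact $G\subseteq\mathbb{T}$ is Ahlfors regular with dimension $\gamma$ if there is $c>0$ with $r^\gamma/c\le\mathcal{H}^\gamma(G\cap B(x,r))\le cr^\gamma$ for all $x\in G$, $r>0$, where $B(x,r)$ is the open arc centered at $x$ of length $2r$. $\mathcal{E}(\mathrm{X},\mathrm{r}^\nu)=\{\xi\in\mathbb{T}: d(\xi,X_n)<r_n^\nu\text{ for infinitely many }n\}$. *)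

theory Defs
  imports "HOL-Probability.Probability"
begin

text \<open>The circle T = R/Z is represented by the set of representatives [0,1)
  of real numbers, equipped with the quotient distance.\<close>

definition torus :: "real set" where
  "torus = {0..<1}"

definition tdist :: "real \<Rightarrow> real \<Rightarrow> real" where
  "tdist x y = (INF k::int. \<bar>x - y - of_int k\<bar>)"

definition torus_metric :: "real metric" where
  "torus_metric = metric (torus, tdist)"

definition torus_borel :: "real measure" where
  "torus_borel = sigma torus {U. openin (mtopology_of torus_metric) U}"

definition tball :: "real \<Rightarrow> real \<Rightarrow> real set" where
  "tball x r = {y \<in> torus. tdist x y < r}"

definition tdiam :: "real set \<Rightarrow> real" where
  "tdiam U = (if U = {} then 0 else (SUP x\<in>U. SUP y\<in>U. tdist x y))"

definition hausdorff_pre :: "real \<Rightarrow> real \<Rightarrow> real set \<Rightarrow> ennreal" where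
  "hausdorff_pre \<gamma> \<delta> A =
     (INF U \<in> {U :: nat \<Rightarrow> real set. (\<forall>i. U i \<subseteq> torus \<and> tdiam (U i) \<le> \<delta>) \<and> A \<subseteq> (\<Union>i. U i)}.
        (\<Sum>i. ennreal (tdiam (U i) powr \<gamma>)))"

definition hausdorff :: "real \<Rightarrow> real set \<Rightarrow> ennreal" where
  "hausdorff \<gamma> A = (SUP \<delta> \<in> {0<..}. hausdorff_pre \<gamma> \<delta> A)"

definition ahlfors_regular :: "real set \<Rightarrow> real \<Rightarrow> bool" where
  "ahlfors_regular G \<gamma> \<longleftrightarrow> G \<subseteq> torus \<and> (\<exists>c>0. \<forall>x\<in>G. \<forall>r. 0 < r \<and> r \<le> 1 \<longrightarrow>
      ennreal (r powr \<gamma> / c) \<le> hausdorff \<gamma> (G \<inter> tball x r) \<and>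
      hausdorff \<gamma> (G \<inter> tball x r) \<le> ennreal (c * r powr \<gamma>))"

definition hausdorff_prob :: "real \<Rightarrow> real set \<Rightarrow> real measure" where
  "hausdorff_prob \<gamma> G = measure_of torus (sets torus_borel)
      (\<lambda>A. hausdorff \<gamma> (A \<inter> G) / hausdorff \<gamma> G)"

definition limsup_hits :: "(nat \<Rightarrow> real) \<Rightarrow> (nat \<Rightarrow> real) \<Rightarrow> real \<Rightarrow> real set" where
  "limsup_hits X r \<nu> = {\<xi> \<in> torus. \<exists>\<^sub>\<infinity>n. tdist \<xi> (X n) < r n powr \<nu>}"

end

theory Submission
  imports Defs "HOL-Real_Asymp.Real_Asymp"
begin

definition dnear :: "real \<Rightarrow> real" where "dnear t = \<bar>t - of_int (round t)\<bar>"

lemma dnear_le: "dnear t \<le> \<bar>t - of_int k\<bar>"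
proof (cases "k = round t")
  case True then show ?thesis by (simp add: dnear_def)
next
  case False
  have h: "\<bar>of_int (round t) - t\<bar> \<le> 1/2" by (rule of_int_round_abs_le)
  have "\<bar>k - round t\<bar> \<ge> 1" using False by linarith
  then have "\<bar>real_of_int k - of_int (round t)\<bar> \<ge> 1"
    by (metis of_int_1_le_iff of_int_abs of_int_diff)
  moreover have "\<And>a b c::real. \<bar>b - a\<bar> \<ge> 1 \<Longrightarrow> \<bar>a - c\<bar> \<le> 1/2 \<Longrightarrow> \<bar>c - a\<bar> \<le> \<bar>c - b\<bar>"
    by linarith
  ultimately show ?thesis using h unfolding dnear_def by blast
qed

lemma tdist_dnear: "tdist x y = dnear (x - y)"
  unfolding tdist_def
proof (rule antisym)
  show "(INF k::int. \<bar>x - y - of_int k\<bar>) \<le> dnear (x - y)"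
    unfolding dnear_def by (rule cINF_lower2[where x="round (x-y)"]) (auto intro: bdd_belowI2[where m=0])
  show "dnear (x - y) \<le> (INF k::int. \<bar>x - y - of_int k\<bar>)"
    by (rule cINF_greatest) (auto simp: dnear_le)
qed

lemma dnear_half: "dnear t \<le> 1/2"
  using of_int_round_abs_le[of t] by (simp add: dnear_def abs_minus_commute)

lemma dnear_nonneg: "0 \<le> dnear t" by (simp add: dnear_def)

lemma dnear_minus: "dnear (-t) = dnear t"
proof (rule antisym)
  show "dnear (-t) \<le> dnear t" using dnear_le[of "-t" "- round t"] by (simp add: dnear_def abs_minus_commute)
  show "dnear t \<le> dnear (-t)" using dnear_le[of "t" "- round (-t)"] by (simp add: dnear_def)
qed

lemma dnear_add: "dnear (a + b) \<le> dnear a + dnear b"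
proof -
  have "dnear (a+b) \<le> \<bar>a + b - of_int (round a + round b)\<bar>" by (rule dnear_le)
  also have "\<dots> \<le> dnear a + dnear b" unfolding dnear_def by simp
  finally show ?thesis .
qed

lemma tdist_le_abs: "tdist x y \<le> \<bar>x - y\<bar>"
  using dnear_le[of "x-y" 0] by (simp add: tdist_dnear)

lemma tdist_nonneg: "0 \<le> tdist x y" by (simp add: tdist_dnear dnear_nonneg)
lemma tdist_half: "tdist x y \<le> 1/2" unfolding tdist_dnear by (rule dnear_half)
lemma tdist_commute: "tdist x y = tdist y x"
  by (metis tdist_dnear dnear_minus minus_diff_eq)
lemma tdist_triangle: "tdist x z \<le> tdist x y + tdist y z"
  using dnear_add[of "x-y" "y-z"] by (simp add: tdist_dnear)

lemma tdist_zero: "x \<in> torus \<Longrightarrow> y \<in> torus \<Longrightarrow> tdist x y = 0 \<longleftrightarrow> x = y"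
proof
  assume x: "x \<in> torus" and y: "y \<in> torus" and d: "tdist x y = 0"
  then have e: "x - y = of_int (round (x-y))" by (simp add: tdist_dnear dnear_def)
  have "\<bar>x - y\<bar> < 1" using x y by (auto simp: torus_def)
  then have "\<bar>real_of_int (round (x-y))\<bar> < 1" using e by simp
  then have "\<bar>round (x-y)\<bar> < 1" by (metis of_int_abs of_int_1 of_int_less_iff)
  then have "round (x-y) = 0" by linarith
  then show "x = y" using e by simp
qed (simp add: tdist_dnear dnear_def)

lemma Metric_torus: "Metric_space torus tdist"
  by (unfold_locales) (auto simp: tdist_nonneg tdist_commute tdist_zero tdist_triangle[of _ _ "_"])

lemma mtop_torus: "mtopology_of torus_metric = Metric_space.mtopology torus tdist"
  by (simp add: torus_metric_def mtopology_of_def Metric_space.mspace_metric[OF Metric_torus]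
        Metric_space.mdist_metric[OF Metric_torus])

lemma tball_mball: "y \<in> torus \<Longrightarrow> tball y h = Metric_space.mball torus tdist y h"
  by (auto simp: tball_def Metric_space.mball_def[OF Metric_torus])


lemma setup_facts:
  fixes G :: "real set" and \<gamma> :: real
    and M :: "'a measure" and X :: "nat \<Rightarrow> 'a \<Rightarrow> real" and n :: nat
  assumes M: "prob_space M"
    and X_meas: "\<And>n. X n \<in> measurable M torus_borel"
    and X_distr: "\<And>n. distr M torus_borel (X n) = hausdorff_prob \<gamma> G"
    and A: "A \<in> sets torus_borel"
  shows "emeasure M (X n -` A \<inter> space M) = hausdorff \<gamma> (A \<inter> G) / hausdorff \<gamma> G"
proof -
  interpret P: prob_space M by (rule M)
  interpret T: Metric_space torus tdist by (rule Metric_torus)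
  have sub: "{U. openin (mtopology_of torus_metric) U} \<subseteq> Pow torus"
    unfolding mtop_torus using openin_subset by fastforce
  have sp: "space torus_borel = torus" unfolding torus_borel_def by (rule space_measure_of_conv)
  define f where "f = (\<lambda>A. hausdorff \<gamma> (A \<inter> G) / hausdorff \<gamma> G)"
  have em: "emeasure (hausdorff_prob \<gamma> G) = (\<lambda>B. if B \<in> sigma_sets torus (sets torus_borel) \<and> measure_space torus (sigma_sets torus (sets torus_borel)) f then f B else 0)"
    unfolding hausdorff_prob_def f_def by (rule emeasure_measure_of_conv)
  have ss: "sigma_sets torus (sets torus_borel) = sets torus_borel"
    using sets.sigma_sets_eq[of torus_borel] sp by simp
  have one: "emeasure (hausdorff_prob \<gamma> G) torus = 1"
  proof -
    have "emeasure (hausdorff_prob \<gamma> G) torus = emeasure (distr M torus_borel (X 0)) torus" using X_distr by simp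
    also have "\<dots> = emeasure M (X 0 -` torus \<inter> space M)"
      using sp by (metis emeasure_distr X_meas sets.top)
    also have "X 0 -` torus \<inter> space M = space M" using X_meas[of 0] sp by (auto dest: measurable_space)
    finally show ?thesis by (simp add: P.emeasure_space_1)
  qed
  have MS: "measure_space torus (sigma_sets torus (sets torus_borel)) f"
  proof (rule ccontr)
    assume "\<not> ?thesis" then have "emeasure (hausdorff_prob \<gamma> G) torus = 0" by (simp add: em)
    then show False using one by simp
  qed
  have "emeasure M (X n -` A \<inter> space M) = emeasure (distr M torus_borel (X n)) A"
    using emeasure_distr[OF X_meas A] by simp
  also have "\<dots> = f A" using X_distr em MS A ss by simp
  finally show ?thesis by (simp add: f_def)
qed


lemma topo_facts:
  fixes G :: "real set"
  assumes G_compact: "compactin (mtopology_of torus_metric) G"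
  shows "space torus_borel = torus" "G \<in> sets torus_borel"
    "\<And>y h. y \<in> torus \<Longrightarrow> tball y h \<in> sets torus_borel"
    "\<And>\<xi>. \<xi> \<in> torus \<Longrightarrow> \<xi> \<notin> G \<Longrightarrow> \<exists>e>0. \<forall>y\<in>G. e \<le> tdist \<xi> y"
proof -
  interpret T: Metric_space torus tdist by (rule Metric_torus)
  have sub: "{U. openin (mtopology_of torus_metric) U} \<subseteq> Pow torus"
    unfolding mtop_torus using openin_subset by fastforce
  show sp: "space torus_borel = torus" unfolding torus_borel_def by (rule space_measure_of_conv)
  have ops: "\<And>U. openin T.mtopology U \<Longrightarrow> U \<in> sets torus_borel"
    unfolding torus_borel_def using sub mtop_torus by (auto simp: sets_measure_of_conv)
  have cl: "closedin T.mtopology G" using G_compact compactin_imp_closedin T.Hausdorff_space_mtopology mtop_torus by metis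
  then have op: "openin T.mtopology (torus - G)" by (simp add: closedin_def)
  have Gsub: "G \<subseteq> torus" using cl closedin_subset by fastforce
  have "torus - (torus - G) \<in> sets torus_borel" using sets.compl_sets[OF ops[OF op]] sp by simp
  moreover have "torus - (torus - G) = G" using Gsub by auto
  ultimately show "G \<in> sets torus_borel" by simp
  show "\<And>y h. y \<in> torus \<Longrightarrow> tball y h \<in> sets torus_borel"
    using ops tball_mball by simp
  fix \<xi> assume x: "\<xi> \<in> torus" "\<xi> \<notin> G"
  then obtain e where e: "e > 0" "T.mball \<xi> e \<subseteq> torus - G" using op unfolding T.openin_mtopology by blast
  have "\<forall>y\<in>G. e \<le> tdist \<xi> y"
  proof
    fix y assume "y \<in> G"
    then show "e \<le> tdist \<xi> y" using e x Gsub by (auto simp: T.mball_def not_less[symmetric])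
  qed
  then show "\<exists>e>0. \<forall>y\<in>G. e \<le> tdist \<xi> y" using e by blast
qed


lemma inv_anti: assumes "(x::ennreal) \<le> y" shows "inverse y \<le> inverse x"
proof (cases "x = 0")
  case True then show ?thesis by simp
next
  case False
  show ?thesis
  proof (cases y rule: ennreal_cases)
    case (real b)
    then obtain a where a: "x = ennreal a" "0 \<le> a" using assms
      by (metis ennreal_cases ennreal_less_top leD top.not_eq_extremum)
    then have "0 < a" using False by (metis ennreal_0 less_eq_real_def)
    moreover have "a \<le> b" using assms a real by (simp add: ennreal_le_iff)
    ultimately show ?thesis using a real by (simp add: inverse_ennreal le_imp_inverse_le)
  qed simp
qed

theorem lemma4p2:
  fixes G :: "real set" and \<gamma> \<rho> \<nu> :: real and r :: "nat \<Rightarrow> real"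
    and M :: "'a measure" and X :: "nat \<Rightarrow> 'a \<Rightarrow> real"
  assumes G_compact: "compactin (mtopology_of torus_metric) G"
    and G_ahlfors: "ahlfors_regular G \<gamma>"
    and gamma: "0 < \<gamma>" "\<gamma> \<le> 1"
    and M: "prob_space M"
    and X_meas: "\<And>n. X n \<in> measurable M torus_borel"
    and X_indep: "prob_space.indep_vars M (\<lambda>_. torus_borel) X UNIV"
    and X_distr: "\<And>n. distr M torus_borel (X n) = hausdorff_prob \<gamma> G"
    and r_range: "\<And>n. 0 < r n \<and> r n \<le> 1"
    and r_mono: "decseq r"
    and rho: "0 < \<rho>"
    and r_div: "\<And>\<mu>. \<mu> < \<rho> \<Longrightarrow> \<not> summable (\<lambda>n. r n powr \<mu>)"
    and r_conv: "\<And>\<mu>. \<mu> > \<rho> \<Longrightarrow> summable (\<lambda>n. r n powr \<mu>)"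
    and nu: "0 < \<nu>"
    and gamma_nu: "\<gamma> * \<nu> < \<rho>"
  shows "AE \<omega> in M. limsup_hits (\<lambda>n. X n \<omega>) r \<nu> = G"
proof -
  interpret P: prob_space M by (rule M)
  note tf = topo_facts[OF G_compact]
  have Gsub: "G \<subseteq> torus" using G_ahlfors by (simp add: ahlfors_regular_def)
  obtain c where c: "c>0" "\<And>x r. x\<in>G \<Longrightarrow> 0<r \<Longrightarrow> r\<le>1 \<Longrightarrow> ennreal (r powr \<gamma> / c) \<le> hausdorff \<gamma> (G \<inter> tball x r) \<and> hausdorff \<gamma> (G \<inter> tball x r) \<le> ennreal (c * r powr \<gamma>)"
    using G_ahlfors unfolding ahlfors_regular_def by blast
  have emX: "\<And>A n. A \<in> sets torus_borel \<Longrightarrow> emeasure M (X n -` A \<inter> space M) = hausdorff \<gamma> (A \<inter> G) / hausdorff \<gamma> G"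
    by (rule setup_facts[OF M X_meas X_distr])
  have Xsp: "\<And>n \<omega>. \<omega> \<in> space M \<Longrightarrow> X n \<omega> \<in> torus"
    using X_meas tf(1) by (metis measurable_space)
  have Xev: "\<And>n A. A \<in> sets torus_borel \<Longrightarrow> X n -` A \<inter> space M \<in> P.events"
    using X_meas by (simp add: measurable_sets)
  have XG: "AE \<omega> in M. \<forall>n. X n \<omega> \<in> G"
  proof (subst AE_all_countable, intro allI)
    fix n
    have "X n -` torus \<inter> space M = space M" using Xsp by auto
    then have "1 = hausdorff \<gamma> (torus \<inter> G) / hausdorff \<gamma> G"
      using emX[of torus n] tf(1) P.emeasure_space_1 by (metis sets.top)
    also have "\<dots> = emeasure M (X n -` G \<inter> space M)"
      using emX[OF tf(2), of n] Gsub by (simp add: Int_absorb1)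
    finally have "P.prob (X n -` G \<inter> space M) = 1" by (simp add: P.emeasure_eq_measure)
    then have "AE \<omega> in M. \<omega> \<in> X n -` G \<inter> space M" by (rule P.AE_prob_1)
    then show "AE \<omega> in M. X n \<omega> \<in> G" by auto
  qed
  have ball_lb: "\<And>n y (h::real). y \<in> G \<Longrightarrow> 0 < h \<Longrightarrow> h \<le> 1 \<Longrightarrow> h powr \<gamma> / c^2 \<le> P.prob (X n -` tball y h \<inter> space M)"
  proof -
    fix n y and h :: real assume y: "y \<in> G" and h: "0 < h" "h \<le> 1"
    have "tdist y z < 1" for z using tdist_half[of y z] by linarith
    then have "G \<inter> tball y 1 = G" using Gsub by (auto simp: tball_def)
    then have HG: "hausdorff \<gamma> G \<le> ennreal c" using c(2)[OF y, of 1] by simp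
    have Hb: "ennreal (h powr \<gamma> / c) \<le> hausdorff \<gamma> (tball y h \<inter> G)"
      using c(2)[OF y h] by (simp add: Int_commute)
    have "ennreal (h powr \<gamma> / c^2) = ennreal (h powr \<gamma> / c) / ennreal c"
      using c(1) by (subst divide_ennreal) (auto simp: power2_eq_square)
    also have "\<dots> \<le> hausdorff \<gamma> (tball y h \<inter> G) / hausdorff \<gamma> G"
      unfolding divide_ennreal_def using HG Hb by (intro mult_mono inv_anti) auto
    also have "\<dots> = emeasure M (X n -` tball y h \<inter> space M)"
      using emX[of "tball y h" n] tf(3)[of y h] y Gsub by auto
    finally show "h powr \<gamma> / c^2 \<le> P.prob (X n -` tball y h \<inter> space M)"
      by (simp add: P.emeasure_eq_measure)
  qed

  define a where "a = \<nu> * \<gamma>"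
  define b where "b = (a + \<rho>) / 2"
  define \<sigma> where "\<sigma> = 2 / (a + b)"
  have a_pos: "0 < a" using nu gamma by (simp add: a_def)
  have ab: "a < b" "b < \<rho>" using gamma_nu by (auto simp: a_def b_def mult.commute)
  have sig: "0 < \<sigma>" "1 < \<sigma> * b" "\<sigma> * a < 1"
    using a_pos ab by (auto simp: \<sigma>_def field_simps)
  define h where "h = (\<lambda>N. r N powr \<nu> / 3)"
  define cnt where "cnt = (\<lambda>N. nat \<lfloor>1 / h N\<rfloor>)"
  define gp where "gp = (\<lambda>N (j::nat). real j * h N)"
  define J where "J = (\<lambda>N. {j \<in> {0..cnt N}. G \<inter> tball (gp N j) (h N) \<noteq> {}})"
  define yy where "yy = (\<lambda>N j. SOME y. y \<in> G \<inter> tball (gp N j) (h N))"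
  define blk where "blk = (\<lambda>N::nat. {N div 2<..N})"
  define E where "E = (\<lambda>N j. \<Inter>n\<in>blk N. X n -` (torus - tball (yy N j) (h N)) \<inter> space M)"
  define F where "F = (\<lambda>N. \<Union>j\<in>J N. E N j)"
  have rpow: "\<And>n. 0 < r n powr \<nu> \<and> r n powr \<nu> \<le> 1"
  proof
    fix n show "0 < r n powr \<nu>" using r_range[of n] by simp
    show "r n powr \<nu> \<le> 1" using r_range[of n] nu by (intro powr_le1) auto
  qed
  have h_pos: "\<And>N. 0 < h N" and h_le: "\<And>N. h N \<le> 1"
    using rpow by (auto simp: h_def) (smt (verit) rpow)
  have yy: "\<And>N j. j \<in> J N \<Longrightarrow> yy N j \<in> G \<and> yy N j \<in> tball (gp N j) (h N)"
  proof -
    fix N j assume "j \<in> J N"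
    then have "\<exists>y. y \<in> G \<inter> tball (gp N j) (h N)" by (auto simp: J_def)
    then show "yy N j \<in> G \<and> yy N j \<in> tball (gp N j) (h N)" unfolding yy_def by (metis IntE someI_ex)
  qed
  have blk_ne: "\<And>N. 1 \<le> N \<Longrightarrow> blk N \<noteq> {}" by (auto simp: blk_def)
  have blk_fin: "\<And>N. finite (blk N)" by (simp add: blk_def)
  have blk_card: "\<And>N. real N / 2 \<le> real (card (blk N))" by (simp add: blk_def)
  have Bs: "\<And>N j. j \<in> J N \<Longrightarrow> tball (yy N j) (h N) \<in> sets torus_borel"
    using tf(3) yy Gsub by blast
  have cBs: "\<And>N j. j \<in> J N \<Longrightarrow> torus - tball (yy N j) (h N) \<in> sets torus_borel"
    using Bs tf(1) by (metis sets.compl_sets)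
  have E_ev: "\<And>N j. 1 \<le> N \<Longrightarrow> j \<in> J N \<Longrightarrow> E N j \<in> P.events"
    unfolding E_def using blk_ne blk_fin Xev cBs by (intro sets.finite_INT) auto
  have J_fin: "\<And>N. finite (J N)" by (simp add: J_def)
  have F_ev: "\<And>N. 1 \<le> N \<Longrightarrow> F N \<in> P.events"
    unfolding F_def using E_ev J_fin by (intro sets.finite_UN) auto
  have E_prob: "\<And>N j. 1 \<le> N \<Longrightarrow> j \<in> J N \<Longrightarrow> P.prob (E N j) \<le> exp (- (h N powr \<gamma> / c^2) * real (card (blk N)))"
  proof -
    fix N j assume N: "1 \<le> N" and j: "j \<in> J N"
    define B where "B = tball (yy N j) (h N)"
    define x where "x = h N powr \<gamma> / c^2"
    have "P.prob (E N j) = (\<Prod>n\<in>blk N. P.prob (X n -` (torus - B) \<inter> space M))"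
      unfolding E_def B_def using blk_ne[OF N] blk_fin cBs[OF j]
      by (intro P.indep_varsD[OF X_indep]) auto
    also have "\<dots> \<le> (\<Prod>n\<in>blk N. 1 - x)"
    proof (rule prod_mono)
      fix n assume "n \<in> blk N"
      have eq: "X n -` (torus - B) \<inter> space M = space M - (X n -` B \<inter> space M)" using Xsp by auto
      have "P.prob (X n -` (torus - B) \<inter> space M) = 1 - P.prob (X n -` B \<inter> space M)"
        unfolding eq by (rule P.prob_compl) (rule Xev, use Bs[OF j] B_def in simp)
      moreover have "x \<le> P.prob (X n -` B \<inter> space M)"
        unfolding x_def B_def using ball_lb yy[OF j] h_pos h_le by blast
      ultimately show "0 \<le> P.prob (X n -` (torus - B) \<inter> space M) \<and> P.prob (X n -` (torus - B) \<inter> space M) \<le> 1 - x"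
        by simp
    qed
    also have "\<dots> = (1 - x) ^ card (blk N)" by simp
    also have "\<dots> \<le> exp (- x) ^ card (blk N)"
    proof (rule power_mono)
      obtain n where "n \<in> blk N" using blk_ne[OF N] by blast
      have "x \<le> P.prob (X n -` B \<inter> space M)"
        unfolding x_def B_def using ball_lb yy[OF j] h_pos h_le by blast
      then show "0 \<le> 1 - x" using P.prob_le_1[of "X n -` B \<inter> space M"] by linarith
      show "1 - x \<le> exp (- x)" using exp_ge_add_one_self[of "-x"] by simp
    qed
    also have "\<dots> = exp (- x * real (card (blk N)))"
      by (simp add: exp_of_nat_mult[symmetric] mult.commute)
    finally show "P.prob (E N j) \<le> exp (- (h N powr \<gamma> / c^2) * real (card (blk N)))" by (simp add: x_def)
  qed
  have F_prob: "\<And>N. 1 \<le> N \<Longrightarrow> P.prob (F N) \<le> (1 / h N + 1) * exp (- (h N powr \<gamma> / c^2) * real (card (blk N)))"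
  proof -
    fix N :: nat assume N: "1 \<le> N"
    define e where "e = exp (- (h N powr \<gamma> / c^2) * real (card (blk N)))"
    have "P.prob (F N) \<le> (\<Sum>j\<in>J N. P.prob (E N j))"
      unfolding F_def using J_fin E_ev[OF N] by (intro P.finite_measure_subadditive_finite) auto
    also have "\<dots> \<le> (\<Sum>j\<in>J N. e)" unfolding e_def using E_prob[OF N] by (intro sum_mono) auto
    also have "\<dots> = real (card (J N)) * e" by simp
    also have "\<dots> \<le> (1 / h N + 1) * e"
    proof (rule mult_right_mono)
      have "card (J N) \<le> card {0..cnt N}" unfolding J_def by (intro card_mono) auto
      then have "real (card (J N)) \<le> real (cnt N) + 1" by simp
      also have "real (cnt N) \<le> 1 / h N" unfolding cnt_def using h_pos[of N] by simp
      finally show "real (card (J N)) \<le> 1 / h N + 1" by simp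
      show "0 \<le> e" by (simp add: e_def)
    qed
    finally show "P.prob (F N) \<le> (1 / h N + 1) * exp (- (h N powr \<gamma> / c^2) * real (card (blk N)))"
      by (simp add: e_def)
  qed
  have hit: "\<And>N \<omega> \<xi>. 1 \<le> N \<Longrightarrow> \<omega> \<in> space M \<Longrightarrow> \<omega> \<notin> F N \<Longrightarrow> \<xi> \<in> G \<Longrightarrow> \<exists>n\<in>blk N. tdist \<xi> (X n \<omega>) < r n powr \<nu>"
  proof -
    fix N :: nat and \<omega> \<xi> assume N: "1 \<le> N" and om: "\<omega> \<in> space M" "\<omega> \<notin> F N" and xi: "\<xi> \<in> G"
    have xit: "0 \<le> \<xi>" "\<xi> < 1" using xi Gsub by (auto simp: torus_def)
    define j where "j = nat \<lfloor>\<xi> / h N\<rfloor>"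
    have hN: "0 < h N" by (rule h_pos)
    have fl0: "0 \<le> \<lfloor>\<xi> / h N\<rfloor>" using xit hN by simp
    have jr: "real j = of_int \<lfloor>\<xi> / h N\<rfloor>" unfolding j_def using fl0 by simp
    have "real j \<le> \<xi> / h N" "\<xi> / h N < real j + 1" using jr by linarith+
    then have g1: "gp N j \<le> \<xi>" "\<xi> < gp N j + h N" using hN by (auto simp: gp_def field_simps)
    have "tdist (gp N j) \<xi> < h N" using tdist_le_abs[of "gp N j" \<xi>] g1 by simp
    then have xin: "\<xi> \<in> G \<inter> tball (gp N j) (h N)" using xi Gsub by (auto simp: tball_def)
    have "j \<le> cnt N" unfolding j_def cnt_def
      using xit hN by (intro nat_mono floor_mono) (simp add: divide_right_mono)
    then have jJ: "j \<in> J N" using xin by (auto simp: J_def)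
    from om(2) jJ have "\<omega> \<notin> E N j" by (auto simp: F_def)
    then obtain n where n: "n \<in> blk N" "\<not> (X n \<omega> \<in> torus - tball (yy N j) (h N))"
      using om(1) blk_ne[OF N] by (auto simp: E_def)
    then have Xb: "tdist (yy N j) (X n \<omega>) < h N" using Xsp[OF om(1)] by (auto simp: tball_def)
    have y2: "tdist (gp N j) (yy N j) < h N" using yy[OF jJ] by (auto simp: tball_def)
    have "tdist \<xi> (X n \<omega>) \<le> tdist \<xi> (gp N j) + tdist (gp N j) (yy N j) + tdist (yy N j) (X n \<omega>)"
      using tdist_triangle[of \<xi> "X n \<omega>" "gp N j"] tdist_triangle[of "gp N j" "X n \<omega>" "yy N j"] by linarith
    also have "\<dots> < 3 * h N" using \<open>tdist (gp N j) \<xi> < h N\<close> y2 Xb tdist_commute[of \<xi> "gp N j"] by linarith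
    also have "\<dots> = r N powr \<nu>" by (simp add: h_def)
    also have "\<dots> \<le> r n powr \<nu>"
      using n(1) r_mono r_range[of N] nu by (intro powr_mono2) (auto simp: blk_def decseq_def)
    finally show "\<exists>n\<in>blk N. tdist \<xi> (X n \<omega>) < r n powr \<nu>" using n(1) by blast
  qed
  define S where "S = {N::nat. 1 \<le> N \<and> real N powr (-\<sigma>) \<le> r N}"
  have freqS: "\<And>m. \<exists>N\<ge>m. N \<in> S"
  proof (rule ccontr)
    fix m assume "\<not> (\<exists>N\<ge>m. N \<in> S)"
    then have nS: "\<And>N. N \<ge> m \<Longrightarrow> N \<notin> S" by blast
    have cmp: "\<And>N. max m 1 \<le> N \<Longrightarrow> norm (r N powr b) \<le> real N powr (-(\<sigma>*b))"
    proof -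
      fix N assume N: "max m 1 \<le> N"
      then have "r N < real N powr (-\<sigma>)" using nS[of N] by (auto simp: S_def)
      then have "r N powr b \<le> (real N powr (-\<sigma>)) powr b"
        using r_range[of N] ab a_pos by (intro powr_mono2) auto
      also have "\<dots> = real N powr (-(\<sigma>*b))" by (simp add: powr_powr)
      finally show "norm (r N powr b) \<le> real N powr (-(\<sigma>*b))" by simp
    qed
    have sg: "summable (\<lambda>N. real N powr (-(\<sigma>*b)))"
      using sig by (subst summable_real_powr_iff) simp
    have "summable (\<lambda>N. r N powr b)"
      by (rule summable_comparison_test'[OF sg cmp])
    with r_div[OF ab(2)] show False by simp
  qed
  define K where "K = 1 / (2 * c^2 * 3 powr \<gamma>)"
  define g where "g = (\<lambda>x::real. (3 * x powr (\<sigma>*\<nu>) + 1) * exp (- (K * x powr (1 - \<sigma>*a))))"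
  have K_pos: "0 < K" using c(1) by (simp add: K_def)
  have F_g: "\<And>N. N \<in> S \<Longrightarrow> P.prob (F N) \<le> g (real N)"
  proof -
    fix N assume "N \<in> S"
    then have N: "1 \<le> N" and rN: "real N powr (-\<sigma>) \<le> r N" by (auto simp: S_def)
    have Npos: "0 < real N" using N by simp
    have rNp: "0 < r N" using r_range by blast
    have low: "real N powr (-(\<sigma>*\<nu>)) \<le> r N powr \<nu>"
    proof -
      have "real N powr (-(\<sigma>*\<nu>)) = (real N powr (-\<sigma>)) powr \<nu>" by (simp add: powr_powr)
      also have "\<dots> \<le> r N powr \<nu>" using rN nu by (intro powr_mono2) auto
      finally show ?thesis .
    qed
    have A1: "1 / h N \<le> 3 * real N powr (\<sigma>*\<nu>)"
    proof -
      have "1 / h N = 3 / r N powr \<nu>" by (simp add: h_def)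
      also have "\<dots> \<le> 3 / real N powr (-(\<sigma>*\<nu>))"
        using low Npos rpow[of N] by (intro divide_left_mono) (auto intro: mult_pos_pos)
      also have "\<dots> = 3 * real N powr (\<sigma>*\<nu>)" by (simp add: powr_minus divide_inverse)
      finally show ?thesis .
    qed
    have lowa: "real N powr (-(\<sigma>*a)) \<le> r N powr a"
    proof -
      have "real N powr (-(\<sigma>*a)) = (real N powr (-\<sigma>)) powr a" by (simp add: powr_powr)
      also have "\<dots> \<le> r N powr a" using rN a_pos by (intro powr_mono2) auto
      finally show ?thesis .
    qed
    have hg: "h N powr \<gamma> = r N powr a / 3 powr \<gamma>"
      unfolding h_def a_def using rNp by (simp add: powr_divide powr_powr)
    have A2: "K * real N powr (1 - \<sigma>*a) \<le> h N powr \<gamma> / c^2 * real (card (blk N))"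
    proof -
      have "K * real N powr (1 - \<sigma>*a) = real N powr (-(\<sigma>*a)) / 3 powr \<gamma> / c^2 * (real N / 2)"
        using Npos by (simp add: K_def powr_diff powr_minus field_simps)
      also have "\<dots> \<le> r N powr a / 3 powr \<gamma> / c^2 * real (card (blk N))"
        using lowa blk_card[of N] Npos c(1)
        by (intro mult_mono divide_right_mono) auto
      finally show ?thesis by (simp add: hg)
    qed
    have "P.prob (F N) \<le> (1 / h N + 1) * exp (- (h N powr \<gamma> / c^2) * real (card (blk N)))"
      by (rule F_prob[OF N])
    also have "\<dots> \<le> (3 * real N powr (\<sigma>*\<nu>) + 1) * exp (- (K * real N powr (1 - \<sigma>*a)))"
      using A1 A2 by (intro mult_mono) auto
    finally show "P.prob (F N) \<le> g (real N)" by (simp add: g_def)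
  qed
  have g0: "(\<lambda>N. g (real N)) \<longlonglongrightarrow> 0"
  proof -
    have "0 < 1 - \<sigma>*a" using sig by simp
    then have "(g \<longlongrightarrow> 0) at_top" unfolding g_def using K_pos by real_asymp
    then show ?thesis by (rule filterlim_compose) (rule filterlim_real_sequentially)
  qed
  define NK where "NK = (\<lambda>K0. \<Inter>N\<in>{N\<in>S. K0 \<le> N}. F N)"
  have NKnull: "\<And>K0. NK K0 \<in> null_sets M"
  proof -
    fix K0 :: nat
    have ne: "{N\<in>S. K0 \<le> N} \<noteq> {}" using freqS[of K0] by auto
    have ev: "NK K0 \<in> P.events" unfolding NK_def
      using ne F_ev by (intro sets.countable_INT) (auto simp: S_def)
    have le: "\<And>N. N \<in> S \<Longrightarrow> K0 \<le> N \<Longrightarrow> P.prob (NK K0) \<le> g (real N)"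
    proof -
      fix N assume N: "N \<in> S" "K0 \<le> N"
      have "NK K0 \<subseteq> F N" unfolding NK_def using N by blast
      then have "P.prob (NK K0) \<le> P.prob (F N)"
        using F_ev N by (intro P.finite_measure_mono) (auto simp: S_def)
      also have "\<dots> \<le> g (real N)" using F_g N by blast
      finally show "P.prob (NK K0) \<le> g (real N)" .
    qed
    have "P.prob (NK K0) \<le> 0 + e" if e: "0 < e" for e
    proof -
      obtain N1 where N1: "\<And>N. N \<ge> N1 \<Longrightarrow> norm (g (real N) - 0) < e"
        using LIMSEQ_D[OF g0 e] by blast
      obtain N where N: "N \<ge> max K0 N1" "N \<in> S" using freqS by blast
      have "P.prob (NK K0) \<le> g (real N)" using le N by auto
      also have "\<dots> \<le> e" using N1[of N] N by auto
      finally show ?thesis by simp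
    qed
    then have "P.prob (NK K0) \<le> 0" by (rule field_le_epsilon)
    then have "P.prob (NK K0) = 0" using measure_nonneg[of M "NK K0"] by linarith
    then show "NK K0 \<in> null_sets M" using ev by (simp add: P.emeasure_eq_measure null_setsI)
  qed
  have AEK: "AE \<omega> in M. \<forall>K0. \<omega> \<notin> NK K0"
    by (subst AE_all_countable) (intro allI AE_not_in NKnull)
  have rlim: "\<And>e. 0 < e \<Longrightarrow> \<exists>N0. \<forall>n\<ge>N0. r n powr \<nu> < e"
  proof -
    fix e :: real assume e: "0 < e"
    have "(\<lambda>n. r n powr (\<rho>+1)) \<longlonglongrightarrow> 0" using r_conv[of "\<rho>+1"] by (intro summable_LIMSEQ_zero) simp
    moreover have "0 < e powr ((\<rho>+1)/\<nu>)" using e by simp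
    ultimately obtain N0 where N0: "\<And>n. n \<ge> N0 \<Longrightarrow> norm (r n powr (\<rho>+1) - 0) < e powr ((\<rho>+1)/\<nu>)"
      using LIMSEQ_D by blast
    have "r n powr \<nu> < e" if n: "n \<ge> N0" for n
    proof -
      have "r n powr (\<rho>+1) < e powr ((\<rho>+1)/\<nu>)" using N0[OF n] by simp
      then have "(r n powr (\<rho>+1)) powr (\<nu>/(\<rho>+1)) < (e powr ((\<rho>+1)/\<nu>)) powr (\<nu>/(\<rho>+1))"
        using rho nu by (intro powr_less_mono2) auto
      then show ?thesis using rho nu e by (simp add: powr_powr)
    qed
    then show "\<exists>N0. \<forall>n\<ge>N0. r n powr \<nu> < e" by blast
  qed
  show ?thesis using XG AEK AE_space
  proof eventually_elim
    case (elim \<omega>)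
    then have XGw: "\<And>n. X n \<omega> \<in> G" and Kw: "\<And>K0. \<omega> \<notin> NK K0" and sw: "\<omega> \<in> space M" by auto
    show "limsup_hits (\<lambda>n. X n \<omega>) r \<nu> = G"
    proof (rule set_eqI iffI)+
      fix \<xi> assume "\<xi> \<in> limsup_hits (\<lambda>n. X n \<omega>) r \<nu>"
      then have xt: "\<xi> \<in> torus" and fr: "\<exists>\<^sub>\<infinity>n. tdist \<xi> (X n \<omega>) < r n powr \<nu>"
        by (auto simp: limsup_hits_def)
      show "\<xi> \<in> G"
      proof (rule ccontr)
        assume "\<xi> \<notin> G"
        then obtain e where e: "e > 0" "\<And>y. y \<in> G \<Longrightarrow> e \<le> tdist \<xi> y" using tf(4)[OF xt] by blast
        obtain N0 where N0: "\<And>n. n \<ge> N0 \<Longrightarrow> r n powr \<nu> < e" using rlim[OF e(1)] by blast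
        obtain n where n: "n > N0" "tdist \<xi> (X n \<omega>) < r n powr \<nu>" using fr unfolding INFM_nat by blast
        show False using n N0[of n] e(2)[OF XGw[of n]] by simp
      qed
    next
      fix \<xi> assume xi: "\<xi> \<in> G"
      have "\<exists>\<^sub>\<infinity>n. tdist \<xi> (X n \<omega>) < r n powr \<nu>"
        unfolding INFM_nat
      proof
        fix m
        have "\<omega> \<notin> NK (2*m+2)" by (rule Kw)
        then obtain N where N: "N \<in> S" "2*m+2 \<le> N" "\<omega> \<notin> F N" by (auto simp: NK_def)
        then have N1: "1 \<le> N" by (simp add: S_def)
        obtain n where n: "n \<in> blk N" "tdist \<xi> (X n \<omega>) < r n powr \<nu>" using hit[OF N1 sw N(3) xi] by blast
        have "m < n" using n(1) N(2) by (auto simp: blk_def)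
        then show "\<exists>n>m. tdist \<xi> (X n \<omega>) < r n powr \<nu>" using n(2) by blast
      qed
      then show "\<xi> \<in> limsup_hits (\<lambda>n. X n \<omega>) r \<nu>" using xi Gsub by (auto simp: limsup_hits_def)
    qed
  qed
qed

end
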